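(* Let $|\nu|\le1$. For all $T>0$ and $\kappa>0$ there exist $\varepsilon_0>0$, $\gamma_0>0$ and $C>0$ such that \[ \|f\|^2_{L^2(H^\gamma)}=\int_0^T\int_{\mathbb{R}}|f(\tau,k)|^2(|k|^{2\gamma}+1)\,dk\,d\tau\le C\varepsilon^{1-\kappa} \] for all $\gamma\in(0,\gamma_0)$ and all $\varepsilon\in(0,\varepsilon_0)$.
   Context: Here $f=f^{(\varepsilon)}$ is the kernel $f(\tau,k)=e^{\tau\nu}\big[\chi_{(-1/\varepsilon,\infty)}(k)e^{-\tau(2+k\varepsilon)^2k^2}-e^{-4\tau k^2}\big]$ for $\tau\in[0,T]$, $k\in\mathbb{R}$ ($\chi_I$ the indicator of $I$); it is the Fourier symbol of the difference between the rescaled Swift–Hohenberg semigroup and the amplitude-equation semigroup $e^{\tau(4\partial_X^2+\nu)}$. *)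

theory Defs
  imports "HOL-Analysis.Analysis"
begin

text \<open>Kernel f^(eps)(tau,k): Fourier symbol of the difference between the rescaled
Swift--Hohenberg semigroup and the amplitude-equation semigroup.\<close>
definition SH_kernel :: "real \<Rightarrow> real \<Rightarrow> real \<Rightarrow> real \<Rightarrow> real" where
  "SH_kernel \<epsilon> \<nu> \<tau> k =
     exp (\<tau> * \<nu>) *
       ((if k \<in> {-1/\<epsilon><..} then exp (- \<tau> * (2 + k * \<epsilon>)^2 * k^2) else 0)
        - exp (- 4 * \<tau> * k^2))"

definition L2Hgamma_sq :: "real \<Rightarrow> real \<Rightarrow> (real \<Rightarrow> real \<Rightarrow> real) \<Rightarrow> ennreal" where
  "L2Hgamma_sq T \<gamma> g =
     (\<integral>\<^sup>+ \<tau>. (\<integral>\<^sup>+ k. ennreal ((g \<tau> k)^2 * (\<bar>k\<bar> powr (2*\<gamma>) + 1)) \<partial>lborel)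
        * indicator {0..T} \<tau> \<partial>lborel)"

end

theory Submission
  imports Defs
begin


lemma exp_int_le1:
  fixes c T :: real assumes c: "0 \<le> c" and T: "0 \<le> T"
  shows "(\<integral>\<^sup>+\<tau>. ennreal (c * exp (- c * \<tau>)) * indicator {0..T} \<tau> \<partial>lborel) \<le> 1"
proof -
  have "(\<integral>\<^sup>+\<tau>. ennreal (c * exp (- c * \<tau>)) * indicator {0..T} \<tau> \<partial>lborel)
        = ennreal (- exp (- c * T) - (- exp (- c * 0)))"
    by (rule nn_integral_FTC_Icc) (auto intro!: derivative_eq_intros simp: T c)
  also have "\<dots> \<le> 1" by simp
  finally show ?thesis .
qed

lemma tail_int:
  fixes d R :: real assumes d: "d < 1" and R: "0 < R"
  shows "(\<integral>\<^sup>+k. ennreal (k powr (d - 2)) * indicator {R..} k \<partial>lborel) = ennreal (R powr (d - 1) / (1 - d))"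
proof -
  have "(\<integral>\<^sup>+k. ennreal (k powr (d - 2)) * indicator {R..} k \<partial>lborel)
      = ennreal (0 - (R powr (d - 1) / (d - 1)))"
  proof (rule nn_integral_FTC_atLeast)
    show "(\<lambda>k. k powr (d - 2)) \<in> borel_measurable borel" by measurable
    fix x assume "R \<le> x"
    then have x: "0 < x" using R by simp
    show "((\<lambda>k. k powr (d - 1) / (d - 1)) has_real_derivative x powr (d - 2)) (at x)"
      proof -
      have "((\<lambda>k. k powr (d - 1) / (d - 1)) has_real_derivative ((d - 1) * x powr (d - 1 - 1) / (d - 1))) (at x)"
        using x by (auto intro!: derivative_eq_intros)
      moreover have "(d - 1) * x powr (d - 1 - 1) / (d - 1) = x powr (d - 2)" using d by simp
      ultimately show ?thesis by simp
    qed
    show "0 \<le> x powr (d - 2)" by simp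
  next
    have "((\<lambda>k. k powr (d - 1)) \<longlongrightarrow> 0) at_top"
      using d by (intro tendsto_neg_powr) (auto simp: filterlim_ident)
    then show "((\<lambda>k. k powr (d - 1) / (d - 1)) \<longlongrightarrow> 0) at_top"
      using tendsto_divide_zero by blast
  qed
  also have "0 - (R powr (d - 1) / (d - 1)) = R powr (d - 1) / (1 - d)"
    using d by (simp add: field_simps)
  finally show ?thesis .
qed



lemma exp_diff_le:
  fixes x y :: real assumes "m \<le> x" "m \<le> y"
  shows "\<bar>exp (- x) - exp (- y)\<bar> \<le> exp (- m) * \<bar>x - y\<bar>"
proof -
  have key: "exp (- u) - exp (- v) \<le> exp (- m) * (v - u)" if "u \<le> v" "m \<le> u" for u v :: real
  proof -
    have "exp (- u) - exp (- v) = exp (- u) * (1 - exp (- (v - u)))"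
      by (simp add: algebra_simps exp_diff[symmetric] exp_add[symmetric])
    also have "\<dots> \<le> exp (- u) * (v - u)"
      by (intro mult_left_mono) (use exp_ge_add_one_self[of "u - v"] in \<open>auto simp del: exp_ge_add_one_self\<close>)
    also have "\<dots> \<le> exp (- m) * (v - u)"
      using that by (intro mult_right_mono) auto
    finally show ?thesis .
  qed
  show ?thesis
  proof (cases "x \<le> y")
    case True
    then have "exp (- y) \<le> exp (- x)" by simp
    then show ?thesis using key[OF True assms(1)] True by simp
  next
    case False
    then have "exp (- x) \<le> exp (- y)" by simp
    then show ?thesis using key[of y x] False assms(2) by simp
  qed
qed

lemma sq_exp_bound:
  fixes x :: real assumes "0 \<le> x" shows "x\<^sup>2 \<le> 4 * exp x"
proof -
  have "1 + x/2 \<le> exp (x/2)" by (rule exp_ge_add_one_self)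
  then have "(1 + x/2)^2 \<le> (exp (x/2))^2" using assms by (intro power_mono) auto
  also have "(exp (x/2))^2 = exp x" by (simp add: power2_eq_square exp_add[symmetric])
  finally show ?thesis using assms by (simp add: power2_eq_square algebra_simps)
qed



lemma sq_diff_max:
  fixes p q :: real assumes "0 \<le> p" "0 \<le> q" shows "(p - q)^2 \<le> max (p^2) (q^2)"
proof (cases "q \<le> p")
  case True
  then have "(p - q)^2 \<le> p^2" using assms by (intro power_mono) auto
  then show ?thesis by simp
next
  case False
  then have "(p - q)^2 = (q - p)^2" by (simp add: power2_commute)
  also have "\<dots> \<le> q^2" using assms False by (intro power_mono) auto
  finally show ?thesis by simp
qed

lemma G2:
  fixes \<epsilon> \<tau> k :: real assumes e: "0 < \<epsilon>" and t: "0 \<le> \<tau>" and kk: "1/\<epsilon> < \<bar>k\<bar>"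
  shows "((if k \<in> {-1/\<epsilon><..} then exp (- \<tau> * (2 + k * \<epsilon>)^2 * k^2) else 0)
        - exp (- 4 * \<tau> * k^2))^2 \<le> exp (- (2 * k^2) * \<tau>)"
proof -
  have b: "exp (- 4 * \<tau> * k^2) \<le> exp (- \<tau> * k^2)" using t by (simp add: mult_right_mono)
  have b2: "(exp (- 4 * \<tau> * k^2))^2 \<le> exp (- (2 * k^2) * \<tau>)"
  proof -
    have "(exp (- 4 * \<tau> * k^2))^2 \<le> (exp (- \<tau> * k^2))^2" using b by (intro power_mono) auto
    also have "\<dots> = exp (- (2 * k^2) * \<tau>)" by (simp add: power2_eq_square exp_add[symmetric] algebra_simps)
    finally show ?thesis .
  qed
  show ?thesis
  proof (cases "k \<in> {-1/\<epsilon><..}")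
    case False then show ?thesis using b2 by simp
  next
    case True
    then have "-1 < k * \<epsilon>" using e by (simp add: field_simps)
    then have "1 \<le> (2 + k * \<epsilon>)^2" by (intro one_le_power) linarith
    then have "\<tau> * k^2 \<le> \<tau> * (2 + k * \<epsilon>)^2 * k^2"
      using mult_right_mono[OF mult_left_mono[OF \<open>1 \<le> (2 + k * \<epsilon>)^2\<close> t], of "k^2"] by simp
    then have a: "exp (- \<tau> * (2 + k * \<epsilon>)^2 * k^2) \<le> exp (- \<tau> * k^2)" by simp
    have a2: "(exp (- \<tau> * (2 + k * \<epsilon>)^2 * k^2))^2 \<le> exp (- (2 * k^2) * \<tau>)"
    proof -
      have "(exp (- \<tau> * (2 + k * \<epsilon>)^2 * k^2))^2 \<le> (exp (- \<tau> * k^2))^2" using a by (intro power_mono) auto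
      also have "\<dots> = exp (- (2 * k^2) * \<tau>)" by (simp add: power2_eq_square exp_add[symmetric] algebra_simps)
      finally show ?thesis .
    qed
    have "(exp (- \<tau> * (2 + k * \<epsilon>)^2 * k^2) - exp (- 4 * \<tau> * k^2))^2
       \<le> max ((exp (- \<tau> * (2 + k * \<epsilon>)^2 * k^2))^2) ((exp (- 4 * \<tau> * k^2))^2)"
    proof -
      show ?thesis by (rule sq_diff_max) auto
    qed
    with a2 b2 True show ?thesis by simp
  qed
qed

lemma G1:
  fixes \<epsilon> \<tau> k :: real assumes e: "0 < \<epsilon>" and t: "0 \<le> \<tau>" and kk: "\<bar>k\<bar> \<le> 1/\<epsilon>"
  shows "((if k \<in> {-1/\<epsilon><..} then exp (- \<tau> * (2 + k * \<epsilon>)^2 * k^2) else 0)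
        - exp (- 4 * \<tau> * k^2))^2 \<le> 100 * \<epsilon>^2 * (k^2 * exp (- (k^2) * \<tau>))"
proof (cases "k \<in> {-1/\<epsilon><..}")
  case False
  then have k: "k = -1/\<epsilon>" using kk by auto
  then have ek: "\<epsilon>^2 * k^2 = 1" using e by (simp add: power2_eq_square)
  have "exp (- 4 * \<tau> * k^2) \<le> exp (- \<tau> * k^2)" using t by (simp add: mult_right_mono)
  then have "(exp (- 4 * \<tau> * k^2))^2 \<le> (exp (- \<tau> * k^2))^2" by (intro power_mono) auto
  also have "\<dots> \<le> exp (- \<tau> * k^2)"
    using t by (simp add: power2_eq_square mult_le_one mult_nonneg_nonneg)
  also have "\<dots> \<le> 100 * (\<epsilon>^2 * k^2) * exp (- (k^2) * \<tau>)" using ek by (simp add: mult.commute)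
  finally show ?thesis using False by (simp add: algebra_simps)
next
  case True
  then have ke: "-1 < k * \<epsilon>" using e by (simp add: field_simps)
  have ke2: "\<bar>k * \<epsilon>\<bar> \<le> 1" using kk e by (simp add: field_simps abs_mult)
  have "1 \<le> (2 + k * \<epsilon>)^2" using ke by (intro one_le_power) linarith
  then have A: "\<tau> * k^2 \<le> \<tau> * (2 + k * \<epsilon>)^2 * k^2"
    using mult_right_mono[OF mult_left_mono[OF \<open>1 \<le> (2 + k * \<epsilon>)^2\<close> t], of "k^2"] by simp
  have B: "\<tau> * k^2 \<le> 4 * \<tau> * k^2" using t by (simp add: mult_right_mono)
  have "\<bar>exp (- (\<tau> * (2 + k * \<epsilon>)^2 * k^2)) - exp (- (4 * \<tau> * k^2))\<bar>
        \<le> exp (- (\<tau> * k^2)) * \<bar>\<tau> * (2 + k * \<epsilon>)^2 * k^2 - 4 * \<tau> * k^2\<bar>"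
    by (rule exp_diff_le[OF A B])
  also have "\<bar>\<tau> * (2 + k * \<epsilon>)^2 * k^2 - 4 * \<tau> * k^2\<bar> = (\<tau> * k^2) * \<bar>k\<bar> * \<epsilon> * \<bar>4 + k * \<epsilon>\<bar>"
  proof -
    have "\<tau> * (2 + k * \<epsilon>)^2 * k^2 - 4 * \<tau> * k^2 = (\<tau> * k^2) * k * \<epsilon> * (4 + k * \<epsilon>)"
      by (simp add: power2_eq_square algebra_simps)
    then show ?thesis using t e by (simp add: abs_mult)
  qed
  also have "\<dots> \<le> (\<tau> * k^2) * \<bar>k\<bar> * \<epsilon> * 5"
  proof -
    have "\<bar>4 + k * \<epsilon>\<bar> \<le> 5" using abs_le_D1[OF ke2] abs_le_D2[OF ke2] by linarith
    then show ?thesis using t e by (intro mult_left_mono) auto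
  qed
  finally have D: "\<bar>exp (- (\<tau> * (2 + k * \<epsilon>)^2 * k^2)) - exp (- (4 * \<tau> * k^2))\<bar>
        \<le> exp (- (\<tau> * k^2)) * ((\<tau> * k^2) * \<bar>k\<bar> * \<epsilon> * 5)" by (simp add: mult_left_mono)
  define x where "x = \<tau> * k^2"
  have x0: "0 \<le> x" using t by (simp add: x_def)
  have "(exp (- (\<tau> * (2 + k * \<epsilon>)^2 * k^2)) - exp (- (4 * \<tau> * k^2)))^2
       \<le> (exp (- x) * (x * \<bar>k\<bar> * \<epsilon> * 5))^2"
    using D unfolding x_def by (metis abs_ge_zero power2_abs power_mono)
  also have "\<dots> = 25 * \<epsilon>^2 * k^2 * (x^2 * exp (- x) * exp (- x))"
    by (simp add: power2_eq_square algebra_simps)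
  also have "\<dots> \<le> 25 * \<epsilon>^2 * k^2 * (4 * exp x * exp (- x) * exp (- x))"
    using sq_exp_bound[OF x0] by (intro mult_left_mono mult_right_mono) auto
  also have "\<dots> = 100 * \<epsilon>^2 * (k^2 * exp (- (k^2) * \<tau>))"
    by (simp add: x_def exp_minus field_simps)
  finally show ?thesis using True by (simp add: algebra_simps)
qed


definition Mw :: "real \<Rightarrow> real \<Rightarrow> real" where "Mw \<delta> k = max 1 \<bar>k\<bar> powr \<delta>"

definition Hb :: "real \<Rightarrow> real \<Rightarrow> real \<Rightarrow> real \<Rightarrow> real" where
  "Hb T \<delta> \<epsilon> k = exp (2 * T) * (if \<bar>k\<bar> \<le> 1/\<epsilon> then 200 * \<epsilon> powr (2 - \<delta>) else \<bar>k\<bar> powr (\<delta> - 2))"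

lemma exp_nu_sq:
  fixes \<nu> \<tau> T :: real assumes "\<bar>\<nu>\<bar> \<le> 1" "0 \<le> \<tau>" "\<tau> \<le> T"
  shows "(exp (\<tau> * \<nu>))^2 \<le> exp (2 * T)"
proof -
  have "\<tau> * \<nu> \<le> T"
  proof -
    have "\<tau> * \<nu> \<le> \<tau> * 1" using assms by (intro mult_left_mono) auto
    then show ?thesis using assms by simp
  qed
  then show ?thesis by (simp add: power2_eq_square exp_add[symmetric] mult.commute)
qed

lemma pw1:
  fixes \<epsilon> \<nu> \<tau> T \<delta> k :: real
  assumes e: "0 < \<epsilon>" "\<epsilon> < 1" and nu: "\<bar>\<nu>\<bar> \<le> 1" and t: "0 \<le> \<tau>" "\<tau> \<le> T" and d: "0 < \<delta>"
    and True: "\<bar>k\<bar> \<le> 1/\<epsilon>"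
  shows "(SH_kernel \<epsilon> \<nu> \<tau> k)^2 * (2 * Mw \<delta> k) \<le> Hb T \<delta> \<epsilon> k * (k^2 * exp (- (k^2) * \<tau>))"
proof -
  define g where "g = ((if k \<in> {-1/\<epsilon><..} then exp (- \<tau> * (2 + k * \<epsilon>)^2 * k^2) else 0)
        - exp (- 4 * \<tau> * k^2))"
  have SH: "(SH_kernel \<epsilon> \<nu> \<tau> k)^2 = (exp (\<tau> * \<nu>))^2 * g^2"
    by (simp add: SH_kernel_def g_def power_mult_distrib)
  have E: "(exp (\<tau> * \<nu>))^2 \<le> exp (2 * T)" by (rule exp_nu_sq[OF nu t])
  have M0: "0 \<le> Mw \<delta> k" by (simp add: Mw_def)
    have g: "g^2 \<le> 100 * \<epsilon>^2 * (k^2 * exp (- (k^2) * \<tau>))"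
      unfolding g_def by (rule G1[OF e(1) t(1) True])
    have "max 1 \<bar>k\<bar> \<le> 1/\<epsilon>" using True e by (simp add: field_simps)
    then have M: "Mw \<delta> k \<le> (1/\<epsilon>) powr \<delta>" unfolding Mw_def using d by (intro powr_mono2) auto
    have pe: "\<epsilon>^2 * (1/\<epsilon>) powr \<delta> = \<epsilon> powr (2 - \<delta>)"
      using e by (simp add: powr_diff powr_divide field_simps flip: powr_numeral)
    have "(SH_kernel \<epsilon> \<nu> \<tau> k)^2 * (2 * Mw \<delta> k)
        \<le> (exp (2 * T) * (100 * \<epsilon>^2 * (k^2 * exp (- (k^2) * \<tau>)))) * (2 * (1/\<epsilon>) powr \<delta>)"
      unfolding SH using E g M M0 by (intro mult_mono) auto
    also have "\<dots> = (exp (2 * T) * (200 * (\<epsilon>^2 * (1/\<epsilon>) powr \<delta>))) * (k^2 * exp (- (k^2) * \<tau>))"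
      by (simp add: algebra_simps)
    also have "\<dots> = Hb T \<delta> \<epsilon> k * (k^2 * exp (- (k^2) * \<tau>))"
      unfolding pe Hb_def using True by simp
    finally show ?thesis .
qed

lemma pw2:
  fixes \<epsilon> \<nu> \<tau> T \<delta> k :: real
  assumes e: "0 < \<epsilon>" "\<epsilon> < 1" and nu: "\<bar>\<nu>\<bar> \<le> 1" and t: "0 \<le> \<tau>" "\<tau> \<le> T" and d: "0 < \<delta>"
    and False: "\<not> \<bar>k\<bar> \<le> 1/\<epsilon>"
  shows "(SH_kernel \<epsilon> \<nu> \<tau> k)^2 * (2 * Mw \<delta> k) \<le> Hb T \<delta> \<epsilon> k * (2 * k^2 * exp (- (2 * k^2) * \<tau>))"
proof -
  define g where "g = ((if k \<in> {-1/\<epsilon><..} then exp (- \<tau> * (2 + k * \<epsilon>)^2 * k^2) else 0)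
        - exp (- 4 * \<tau> * k^2))"
  have SH: "(SH_kernel \<epsilon> \<nu> \<tau> k)^2 = (exp (\<tau> * \<nu>))^2 * g^2"
    by (simp add: SH_kernel_def g_def power_mult_distrib)
  have E: "(exp (\<tau> * \<nu>))^2 \<le> exp (2 * T)" by (rule exp_nu_sq[OF nu t])
  have M0: "0 \<le> Mw \<delta> k" by (simp add: Mw_def)
    have g: "g^2 \<le> exp (- (2 * k^2) * \<tau>)"
      unfolding g_def by (rule G2[OF e(1) t(1)]) (use False in auto)
    have k1: "1 < \<bar>k\<bar>" using False e by (smt (verit) divide_less_eq_1_pos)
    then have M: "Mw \<delta> k = \<bar>k\<bar> powr \<delta>" by (simp add: Mw_def)
    have k0: "k \<noteq> 0" using k1 by auto
    have "\<bar>k\<bar> powr 2 = \<bar>k\<bar>^2" using k0 by (subst powr_numeral) auto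
    then have pk: "\<bar>k\<bar> powr \<delta> / k^2 = \<bar>k\<bar> powr (\<delta> - 2)"
      by (simp add: powr_diff)
    have "(SH_kernel \<epsilon> \<nu> \<tau> k)^2 * (2 * Mw \<delta> k)
        \<le> (exp (2 * T) * exp (- (2 * k^2) * \<tau>)) * (2 * Mw \<delta> k)"
      unfolding SH using E g M0 by (intro mult_mono) auto
    also have "\<dots> = (exp (2 * T) * (\<bar>k\<bar> powr \<delta> / k^2)) * (2 * k^2 * exp (- (2 * k^2) * \<tau>))"
      using k0 unfolding M by (simp add: field_simps)
    also have "\<dots> = Hb T \<delta> \<epsilon> k * (2 * k^2 * exp (- (2 * k^2) * \<tau>))"
      unfolding pk Hb_def using False by simp
    finally show ?thesis .
qed


lemma stepC:
  fixes \<epsilon> \<nu> T \<delta> k :: real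
  assumes e: "0 < \<epsilon>" "\<epsilon> < 1" and nu: "\<bar>\<nu>\<bar> \<le> 1" and T: "0 \<le> T" and d: "0 < \<delta>"
  shows "(\<integral>\<^sup>+\<tau>. ennreal ((SH_kernel \<epsilon> \<nu> \<tau> k)^2 * (2 * Mw \<delta> k)) * indicator {0..T} \<tau> \<partial>lborel)
         \<le> ennreal (Hb T \<delta> \<epsilon> k)"
proof -
  have H0: "0 \<le> Hb T \<delta> \<epsilon> k" by (simp add: Hb_def)
  obtain c where c: "0 \<le> c" and pw: "\<And>\<tau>. 0 \<le> \<tau> \<Longrightarrow> \<tau> \<le> T \<Longrightarrow>
     (SH_kernel \<epsilon> \<nu> \<tau> k)^2 * (2 * Mw \<delta> k) \<le> Hb T \<delta> \<epsilon> k * (c * exp (- c * \<tau>))"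
  proof (cases "\<bar>k\<bar> \<le> 1/\<epsilon>")
    case True
    show ?thesis by (rule that[of "k^2"]) (use pw1[OF e nu _ _ d True] in auto)
  next
    case False
    show ?thesis by (rule that[of "2 * k^2"]) (use pw2[OF e nu _ _ d False] in auto)
  qed
  have "(\<integral>\<^sup>+\<tau>. ennreal ((SH_kernel \<epsilon> \<nu> \<tau> k)^2 * (2 * Mw \<delta> k)) * indicator {0..T} \<tau> \<partial>lborel)
      \<le> (\<integral>\<^sup>+\<tau>. ennreal (Hb T \<delta> \<epsilon> k) * (ennreal (c * exp (- c * \<tau>)) * indicator {0..T} \<tau>) \<partial>lborel)"
  proof (intro nn_integral_mono)
    fix x :: real
    show "ennreal ((SH_kernel \<epsilon> \<nu> x k)^2 * (2 * Mw \<delta> k)) * indicator {0..T} x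
      \<le> ennreal (Hb T \<delta> \<epsilon> k) * (ennreal (c * exp (- c * x)) * indicator {0..T} x)"
    proof (cases "x \<in> {0..T}")
      case True
      then have "ennreal ((SH_kernel \<epsilon> \<nu> x k)^2 * (2 * Mw \<delta> k)) \<le> ennreal (Hb T \<delta> \<epsilon> k * (c * exp (- c * x)))"
        using pw[of x] by (intro ennreal_leI) auto
      then show ?thesis using True H0 c by (simp add: ennreal_mult')
    qed simp
  qed
  also have "\<dots> = ennreal (Hb T \<delta> \<epsilon> k) * (\<integral>\<^sup>+\<tau>. ennreal (c * exp (- c * \<tau>)) * indicator {0..T} \<tau> \<partial>lborel)"
    by (rule nn_integral_cmult) measurable
  also have "\<dots> \<le> ennreal (Hb T \<delta> \<epsilon> k) * 1"
    by (intro mult_left_mono exp_int_le1 c T) auto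
  finally show ?thesis by simp
qed


lemma tail_abs:
  fixes d R :: real assumes d: "d < 1" and R: "0 < R"
  shows "(\<integral>\<^sup>+k. ennreal (\<bar>k\<bar> powr (d - 2)) * indicator {R..} k \<partial>lborel) = ennreal (R powr (d - 1) / (1 - d))"
proof -
  have "(\<integral>\<^sup>+k. ennreal (\<bar>k\<bar> powr (d - 2)) * indicator {R..} k \<partial>lborel)
      = (\<integral>\<^sup>+k. ennreal (k powr (d - 2)) * indicator {R..} k \<partial>lborel)"
    using R by (intro nn_integral_cong) (auto split: split_indicator)
  also have "\<dots> = ennreal (R powr (d - 1) / (1 - d))" by (rule tail_int[OF d R])
  finally show ?thesis .
qed

lemma tail_neg:
  fixes d R :: real assumes d: "d < 1" and R: "0 < R"
  shows "(\<integral>\<^sup>+k. ennreal (\<bar>k\<bar> powr (d - 2)) * indicator {R..} (- k) \<partial>lborel) = ennreal (R powr (d - 1) / (1 - d))"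
proof -
  let ?f = "\<lambda>k::real. ennreal (\<bar>k\<bar> powr (d - 2)) * indicator {R..} k"
  have "(\<integral>\<^sup>+k. ?f k \<partial>lborel) = ennreal \<bar>-1\<bar> * (\<integral>\<^sup>+k. ?f (0 + (-1) * k) \<partial>lborel)"
    by (rule nn_integral_real_affine) auto
  then show ?thesis using tail_abs[OF d R] by simp
qed

lemma ennreal_sum3: "0 \<le> (a::real) \<Longrightarrow> 0 \<le> b \<Longrightarrow> ennreal a + (ennreal b + ennreal b) = ennreal (a + (b + b))"
  by (simp add: ennreal_plus[symmetric] del: ennreal_plus)

lemma stepD:
  fixes \<epsilon> T \<delta> :: real
  assumes e: "0 < \<epsilon>" "\<epsilon> < 1" and d: "0 < \<delta>" "\<delta> < 1"
  shows "(\<integral>\<^sup>+k. ennreal (Hb T \<delta> \<epsilon> k) \<partial>lborel) \<le> ennreal (exp (2 * T) * (400 + 2 / (1 - \<delta>)) * \<epsilon> powr (1 - \<delta>))"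
proof -
  define R where "R = 1/\<epsilon>"
  have R: "0 < R" using e by (simp add: R_def)
  define A where "A = exp (2 * T) * 200 * \<epsilon> powr (2 - \<delta>)"
  define B where "B = exp (2 * T)"
  have A0: "0 \<le> A" and B0: "0 \<le> B" by (auto simp: A_def B_def)
  have "(\<integral>\<^sup>+k. ennreal (Hb T \<delta> \<epsilon> k) \<partial>lborel)
     \<le> (\<integral>\<^sup>+k. ennreal A * indicator {-R..R} k + (ennreal B * (ennreal (\<bar>k\<bar> powr (\<delta> - 2)) * indicator {R..} k)
            + ennreal B * (ennreal (\<bar>k\<bar> powr (\<delta> - 2)) * indicator {R..} (- k))) \<partial>lborel)"
  proof (intro nn_integral_mono)
    fix k :: real
    show "ennreal (Hb T \<delta> \<epsilon> k) \<le> ennreal A * indicator {-R..R} k + (ennreal B * (ennreal (\<bar>k\<bar> powr (\<delta> - 2)) * indicator {R..} k)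
            + ennreal B * (ennreal (\<bar>k\<bar> powr (\<delta> - 2)) * indicator {R..} (- k)))"
    proof (cases "\<bar>k\<bar> \<le> R")
      case True
      then have "Hb T \<delta> \<epsilon> k = A" by (simp add: Hb_def A_def R_def)
      then show ?thesis using True by (auto simp: abs_le_iff split: split_indicator)
    next
      case False
      then have H: "ennreal (Hb T \<delta> \<epsilon> k) = ennreal B * ennreal (\<bar>k\<bar> powr (\<delta> - 2))"
        by (simp add: Hb_def B_def R_def ennreal_mult)
      show ?thesis
      proof (cases "0 \<le> k")
        case True then show ?thesis using False H by (auto split: split_indicator)
      next
        case f2: False then show ?thesis using False H by (auto split: split_indicator)
      qed
    qed
  qed
  also have "\<dots> = (\<integral>\<^sup>+k. ennreal A * indicator {-R..R} k \<partial>lborel) + ((\<integral>\<^sup>+k. ennreal B * (ennreal (\<bar>k\<bar> powr (\<delta> - 2)) * indicator {R..} k) \<partial>lborel)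
            + (\<integral>\<^sup>+k. ennreal B * (ennreal (\<bar>k\<bar> powr (\<delta> - 2)) * indicator {R..} (- k)) \<partial>lborel))"
  proof -
    have m1: "(\<lambda>k::real. ennreal A * indicator {-R..R} k) \<in> borel_measurable lborel" by measurable
    have m2: "(\<lambda>k::real. ennreal B * (ennreal (\<bar>k\<bar> powr (\<delta> - 2)) * indicator {R..} k)) \<in> borel_measurable lborel"
      by measurable
    have m3: "(\<lambda>k::real. ennreal B * (ennreal (\<bar>k\<bar> powr (\<delta> - 2)) * indicator {R..} (- k))) \<in> borel_measurable lborel"
      by measurable
    have m23: "(\<lambda>k::real. ennreal B * (ennreal (\<bar>k\<bar> powr (\<delta> - 2)) * indicator {R..} k) + ennreal B * (ennreal (\<bar>k\<bar> powr (\<delta> - 2)) * indicator {R..} (- k))) \<in> borel_measurable lborel"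
      using m2 m3 by (rule borel_measurable_add)
    show ?thesis by (simp only: nn_integral_add[OF m1 m23] nn_integral_add[OF m2 m3])
  qed
  also have "\<dots> = ennreal A * ennreal (2 * R) + (ennreal B * ennreal (R powr (\<delta> - 1) / (1 - \<delta>)) + ennreal B * ennreal (R powr (\<delta> - 1) / (1 - \<delta>)))"
    using R by (simp add: nn_integral_cmult_indicator nn_integral_cmult tail_abs tail_neg d)
  also have "\<dots> = ennreal (A * (2 * R) + (B * (R powr (\<delta> - 1) / (1 - \<delta>)) + B * (R powr (\<delta> - 1) / (1 - \<delta>))))"
  proof -
    have X: "0 \<le> R powr (\<delta> - 1) / (1 - \<delta>)" using d by simp
    have "ennreal A * ennreal (2 * R) + (ennreal B * ennreal (R powr (\<delta> - 1) / (1 - \<delta>)) + ennreal B * ennreal (R powr (\<delta> - 1) / (1 - \<delta>)))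
       = ennreal (A * (2 * R)) + (ennreal (B * (R powr (\<delta> - 1) / (1 - \<delta>))) + ennreal (B * (R powr (\<delta> - 1) / (1 - \<delta>))))"
      using A0 B0 R X by (simp only: ennreal_mult)
    also have "\<dots> = ennreal (A * (2 * R) + (B * (R powr (\<delta> - 1) / (1 - \<delta>)) + B * (R powr (\<delta> - 1) / (1 - \<delta>))))"
      using A0 B0 R X by (intro ennreal_sum3 mult_nonneg_nonneg) auto
    finally show ?thesis .
  qed
  also have "A * (2 * R) + (B * (R powr (\<delta> - 1) / (1 - \<delta>)) + B * (R powr (\<delta> - 1) / (1 - \<delta>)))
      = exp (2 * T) * (400 + 2 / (1 - \<delta>)) * \<epsilon> powr (1 - \<delta>)"
  proof -
    have r1: "R powr (\<delta> - 1) = \<epsilon> powr (1 - \<delta>)"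
      using e by (simp add: R_def powr_divide powr_diff)
    have r2: "\<epsilon> powr (2 - \<delta>) * (1/\<epsilon>) = \<epsilon> powr (1 - \<delta>)"
    proof -
      have "\<epsilon> powr 2 = \<epsilon>^2" using e by (subst powr_numeral) auto
      then show ?thesis using e by (simp add: powr_diff power2_eq_square)
    qed
    have a: "A * (2 * R) = exp (2 * T) * 400 * \<epsilon> powr (1 - \<delta>)"
      unfolding A_def R_def r2[symmetric] by simp
    have b: "B * (\<epsilon> powr (1 - \<delta>) / (1 - \<delta>)) + B * (\<epsilon> powr (1 - \<delta>) / (1 - \<delta>))
       = exp (2 * T) * (2 / (1 - \<delta>)) * \<epsilon> powr (1 - \<delta>)"
      unfolding B_def by simp
    show ?thesis unfolding r1 a b by (simp add: algebra_simps)
  qed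
  finally show ?thesis .
qed


lemma weight:
  fixes \<gamma> \<delta> k :: real assumes "0 < \<gamma>" "2 * \<gamma> \<le> \<delta>"
  shows "\<bar>k\<bar> powr (2 * \<gamma>) + 1 \<le> 2 * Mw \<delta> k"
proof -
  have M1: "1 \<le> Mw \<delta> k" unfolding Mw_def using assms by (simp add: ge_one_powr_ge_zero)
  have "\<bar>k\<bar> powr (2 * \<gamma>) \<le> Mw \<delta> k"
  proof (cases "\<bar>k\<bar> \<le> 1")
    case True
    then have "\<bar>k\<bar> powr (2 * \<gamma>) \<le> 1 powr (2 * \<gamma>)" using assms by (intro powr_mono2) auto
    then show ?thesis using M1 by simp
  next
    case False
    then have "\<bar>k\<bar> powr (2 * \<gamma>) \<le> \<bar>k\<bar> powr \<delta>" using assms by (intro powr_mono) auto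
    then show ?thesis using False by (simp add: Mw_def)
  qed
  then show ?thesis using M1 by simp
qed

lemma meas:
  "(case_prod (\<lambda>k \<tau>. ennreal ((SH_kernel \<epsilon> \<nu> \<tau> k)^2 * (2 * Mw \<delta> k)) * indicator {0..T} \<tau>))
     \<in> borel_measurable (lborel \<Otimes>\<^sub>M lborel)"
  unfolding SH_kernel_def Mw_def by measurable


theorem mainTheorem13:
  fixes \<nu> :: real
  assumes "\<bar>\<nu>\<bar> \<le> 1"
  shows "\<forall>T>0. \<forall>\<kappa>>0. \<exists>\<epsilon>\<^sub>0>0. \<exists>\<gamma>\<^sub>0>0. \<exists>C>0.
           \<forall>\<gamma>\<in>{0<..<\<gamma>\<^sub>0}. \<forall>\<epsilon>\<in>{0<..<\<epsilon>\<^sub>0}.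
             L2Hgamma_sq T \<gamma> (SH_kernel \<epsilon> \<nu>) \<le> ennreal (C * \<epsilon> powr (1 - \<kappa>))"
proof (intro allI impI)
  fix T \<kappa> :: real assume T: "0 < T" and \<kappa>: "0 < \<kappa>"
  define \<delta> where "\<delta> = min \<kappa> 1 / 2"
  have d: "0 < \<delta>" "\<delta> < 1" "\<delta> \<le> \<kappa>" using \<kappa> by (auto simp: \<delta>_def)
  define C where "C = exp (2 * T) * (400 + 2 / (1 - \<delta>))"
  have "0 < 2 / (1 - \<delta>)" using d by simp
  then have "0 < 400 + 2 / (1 - \<delta>)" by linarith
  then have C: "0 < C" unfolding C_def by (intro mult_pos_pos) auto
  have main: "\<forall>\<gamma>\<in>{0<..<\<delta>/2}. \<forall>\<epsilon>\<in>{0<..<1}.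
             L2Hgamma_sq T \<gamma> (SH_kernel \<epsilon> \<nu>) \<le> ennreal (C * \<epsilon> powr (1 - \<kappa>))"
  proof (intro ballI)
    fix \<gamma> \<epsilon> :: real assume g: "\<gamma> \<in> {0<..<\<delta>/2}" and e: "\<epsilon> \<in> {0<..<1}"
    have g0: "0 < \<gamma>" "2 * \<gamma> \<le> \<delta>" using g by auto
    have e0: "0 < \<epsilon>" "\<epsilon> < 1" using e by auto
    let ?F = "\<lambda>\<tau> k. ennreal ((SH_kernel \<epsilon> \<nu> \<tau> k)^2 * (2 * Mw \<delta> k)) * indicator {0..T} \<tau>"
    have "L2Hgamma_sq T \<gamma> (SH_kernel \<epsilon> \<nu>)
        \<le> (\<integral>\<^sup>+\<tau>. (\<integral>\<^sup>+k. ennreal ((SH_kernel \<epsilon> \<nu> \<tau> k)^2 * (2 * Mw \<delta> k)) \<partial>lborel) * indicator {0..T} \<tau> \<partial>lborel)"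
      unfolding L2Hgamma_sq_def
      by (intro nn_integral_mono mult_right_mono ennreal_leI mult_left_mono weight[OF g0]) auto
    also have "\<dots> = (\<integral>\<^sup>+\<tau>. (\<integral>\<^sup>+k. ?F \<tau> k \<partial>lborel) \<partial>lborel)"
    proof (intro nn_integral_cong)
      fix \<tau> :: real
      show "(\<integral>\<^sup>+k. ennreal ((SH_kernel \<epsilon> \<nu> \<tau> k)^2 * (2 * Mw \<delta> k)) \<partial>lborel) * indicator {0..T} \<tau>
           = (\<integral>\<^sup>+k. ?F \<tau> k \<partial>lborel)"
        by (cases "\<tau> \<in> {0..T}") auto
    qed
    also have "\<dots> = (\<integral>\<^sup>+k. (\<integral>\<^sup>+\<tau>. ?F \<tau> k \<partial>lborel) \<partial>lborel)"
      by (rule lborel_pair.Fubini'[of "\<lambda>k \<tau>. ?F \<tau> k", OF meas])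
    also have "\<dots> \<le> (\<integral>\<^sup>+k. ennreal (Hb T \<delta> \<epsilon> k) \<partial>lborel)"
      by (intro nn_integral_mono stepC[OF e0 assms _ d(1)]) (use T in auto)
    also have "\<dots> \<le> ennreal (C * \<epsilon> powr (1 - \<delta>))"
      unfolding C_def by (rule stepD[OF e0 d(1,2)])
    also have "\<dots> \<le> ennreal (C * \<epsilon> powr (1 - \<kappa>))"
      using C e0 d by (intro ennreal_leI mult_left_mono powr_mono') auto
    finally show "L2Hgamma_sq T \<gamma> (SH_kernel \<epsilon> \<nu>) \<le> ennreal (C * \<epsilon> powr (1 - \<kappa>))" .
  qed
  show "\<exists>\<epsilon>\<^sub>0>0. \<exists>\<gamma>\<^sub>0>0. \<exists>C>0. \<forall>\<gamma>\<in>{0<..<\<gamma>\<^sub>0}. \<forall>\<epsilon>\<in>{0<..<\<epsilon>\<^sub>0}.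
             L2Hgamma_sq T \<gamma> (SH_kernel \<epsilon> \<nu>) \<le> ennreal (C * \<epsilon> powr (1 - \<kappa>))"
    using main C d by (intro exI[of _ 1] conjI exI[of _ "\<delta>/2"] exI[of _ C]) auto
qed

end
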